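(* Let $G=(V,E)$ be an undirected graph having a strongly connected orientation. A strongly connected orientation $D$ of $G$ is decreasingly minimal among the strongly connected orientations of $G$ if and only if there are no nodes $s,t$ with $\varrho_D(t)\ge\varrho_D(s)+2$ such that $D$ contains two arc-disjoint directed paths from $s$ to $t$.
   Context: $\varrho_D(v)$ is the number of arcs with head $v$. An orientation is decreasingly minimal among a class if its in-degree vector has largest component as small as possible within the class, then second largest as small as possible, and so on. *)

theory Defs
  imports Main "HOL-Library.Multiset"
begin

text \<open>Parallel edges are allowed (distinct identifiers with the same ends).\<close>

definition ugraph :: "'v set \<Rightarrow> 'e set \<Rightarrow> ('e \<Rightarrow> 'v \<times> 'v) \<Rightarrow> bool" where
  "ugraph V E ends \<longleftrightarrow> finite V \<and> finite E \<and>
     (\<forall>e\<in>E. fst (ends e) \<in> V \<and> snd (ends e) \<in> V)"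

definition orientation :: "'e set \<Rightarrow> ('e \<Rightarrow> 'v \<times> 'v) \<Rightarrow> ('e \<Rightarrow> 'v \<times> 'v) \<Rightarrow> bool" where
  "orientation E ends D \<longleftrightarrow> (\<forall>e\<in>E. D e = ends e \<or> D e = prod.swap (ends e))"

definition indeg :: "'e set \<Rightarrow> ('e \<Rightarrow> 'v \<times> 'v) \<Rightarrow> 'v \<Rightarrow> nat" where
  "indeg E D v = card {e\<in>E. snd (D e) = v}"

fun dwalk :: "'e set \<Rightarrow> ('e \<Rightarrow> 'v \<times> 'v) \<Rightarrow> 'v \<Rightarrow> 'v \<Rightarrow> 'e list \<Rightarrow> bool" where
  "dwalk E D s t [] \<longleftrightarrow> s = t"
| "dwalk E D s t (e # es) \<longleftrightarrow> e \<in> E \<and> fst (D e) = s \<and> dwalk E D (snd (D e)) t es"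

definition dpath :: "'v set \<Rightarrow> 'e set \<Rightarrow> ('e \<Rightarrow> 'v \<times> 'v) \<Rightarrow> 'v \<Rightarrow> 'v \<Rightarrow> 'e list \<Rightarrow> bool" where
  "dpath V E D s t es \<longleftrightarrow> s \<in> V \<and> dwalk E D s t es \<and> distinct (s # map (\<lambda>e. snd (D e)) es)"

definition strongly_connected :: "'v set \<Rightarrow> 'e set \<Rightarrow> ('e \<Rightarrow> 'v \<times> 'v) \<Rightarrow> bool" where
  "strongly_connected V E D \<longleftrightarrow> (\<forall>u\<in>V. \<forall>v\<in>V. \<exists>es. dpath V E D u v es)"

definition strong_orientation ::
  "'v set \<Rightarrow> 'e set \<Rightarrow> ('e \<Rightarrow> 'v \<times> 'v) \<Rightarrow> ('e \<Rightarrow> 'v \<times> 'v) \<Rightarrow> bool" where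
  "strong_orientation V E ends D \<longleftrightarrow> orientation E ends D \<and> strongly_connected V E D"

definition indeg_vector :: "'v set \<Rightarrow> 'e set \<Rightarrow> ('e \<Rightarrow> 'v \<times> 'v) \<Rightarrow> nat list" where
  "indeg_vector V E D = rev (sorted_list_of_multiset (image_mset (indeg E D) (mset_set V)))"

definition lex_less :: "nat list \<Rightarrow> nat list \<Rightarrow> bool" where
  "lex_less xs ys \<longleftrightarrow> (\<exists>i < length xs. i < length ys \<and> take i xs = take i ys \<and> xs ! i < ys ! i)"

definition dec_min_strong ::
  "'v set \<Rightarrow> 'e set \<Rightarrow> ('e \<Rightarrow> 'v \<times> 'v) \<Rightarrow> ('e \<Rightarrow> 'v \<times> 'v) \<Rightarrow> bool" where
  "dec_min_strong V E ends D \<longleftrightarrow> strong_orientation V E ends D \<and>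
     (\<forall>D'. strong_orientation V E ends D' \<longrightarrow>
        \<not> lex_less (indeg_vector V E D') (indeg_vector V E D))"

end

theory Submission
  imports Defs
begin


lemma dwalk_append: "dwalk F Or s u p \<Longrightarrow> dwalk F Or u t q \<Longrightarrow> dwalk F Or s t (p @ q)"
  by (induction p arbitrary: s) auto

lemma dwalk_set: "dwalk F Or s t p \<Longrightarrow> set p \<subseteq> F"
  by (induction p arbitrary: s) auto

lemma dwalk_mono: "dwalk F Or s t p \<Longrightarrow> F \<subseteq> G \<Longrightarrow> dwalk G Or s t p"
  by (induction p arbitrary: s) auto

lemma dwalk_snoc: "dwalk F Or s t (p @ [e]) \<longleftrightarrow> dwalk F Or s (fst (Or e)) p \<and> e \<in> F \<and> snd (Or e) = t"
  by (induction p arbitrary: s) auto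

lemma dwalk_drop: "dwalk F Or s t p \<Longrightarrow> j < length p \<Longrightarrow> dwalk F Or (snd (Or (p ! j))) t (drop (Suc j) p)"
proof (induction p arbitrary: s j)
  case Nil then show ?case by simp
next
  case (Cons e p)
  show ?case
  proof (cases j)
    case 0 then show ?thesis using Cons by simp
  next
    case (Suc j')
    have w: "dwalk F Or (snd (Or e)) t p" using Cons.prems by simp
    have "j' < length p" using Cons.prems Suc by simp
    from Cons.IH[OF w this] show ?thesis using Suc by simp
  qed
qed

lemma dwalk_shortcut:
  "dwalk F Or s t p \<Longrightarrow> \<exists>q. dwalk F Or s t q \<and> distinct (s # map (\<lambda>e. snd (Or e)) q) \<and> set q \<subseteq> set p"
proof (induction p arbitrary: s)
  case Nil then show ?case by auto
next
  case (Cons e p)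
  then have e: "e \<in> F" "fst (Or e) = s" and w: "dwalk F Or (snd (Or e)) t p" by auto
  from Cons.IH[OF w] obtain q where q: "dwalk F Or (snd (Or e)) t q"
    "distinct (snd (Or e) # map (\<lambda>e. snd (Or e)) q)" "set q \<subseteq> set p" by blast
  show ?case
  proof (cases "s = snd (Or e)")
    case True then show ?thesis using q by auto
  next
    case False
    show ?thesis
    proof (cases "s \<in> set (map (\<lambda>e. snd (Or e)) q)")
      case True
      then obtain j where j: "j < length q" "snd (Or (q ! j)) = s"
        by (auto simp: in_set_conv_nth)
      have "dwalk F Or s t (drop (Suc j) q)" using dwalk_drop[OF q(1) j(1)] j(2) by simp
      moreover have "distinct (s # map (\<lambda>e. snd (Or e)) (drop (Suc j) q))"
      proof -
        have d: "distinct (map (\<lambda>e. snd (Or e)) q)" using q(2) by simp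
        define xs where "xs = map (\<lambda>e. snd (Or e)) q"
        have sin: "s \<in> set (take (Suc j) xs)"
          using j unfolding xs_def by (auto simp: in_set_conv_nth intro!: exI[of _ j])
        have dd: "distinct (take (Suc j) xs @ drop (Suc j) xs)" using d unfolding xs_def by simp
        then have "s \<notin> set (drop (Suc j) xs)" "distinct (drop (Suc j) xs)"
          using sin by (auto simp del: append_take_drop_id)
        then show ?thesis unfolding xs_def by (simp add: drop_map)
      qed
      moreover have "set (drop (Suc j) q) \<subseteq> set (e # p)" using q(3) set_drop_subset by fastforce
      ultimately show ?thesis by blast
    next
      case False2: False
      have "dwalk F Or s t (e # q)" using e q by simp
      moreover have "distinct (s # map (\<lambda>e. snd (Or e)) (e # q))" using q(2) False False2 by auto
      moreover have "set (e # q) \<subseteq> set (e # p)" using q(3) by auto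
      ultimately show ?thesis by blast
    qed
  qed
qed

definition enter :: "('e \<Rightarrow> 'v \<times> 'v) \<Rightarrow> 'e set \<Rightarrow> 'v set \<Rightarrow> nat" where
  "enter Or A X = card {e\<in>A. fst (Or e) \<notin> X \<and> snd (Or e) \<in> X}"

definition leave :: "('e \<Rightarrow> 'v \<times> 'v) \<Rightarrow> 'e set \<Rightarrow> 'v set \<Rightarrow> nat" where
  "leave Or A X = card {e\<in>A. fst (Or e) \<in> X \<and> snd (Or e) \<notin> X}"

lemma card_insert_filter: "finite A \<Longrightarrow> e \<notin> A \<Longrightarrow>
  card {x\<in>insert e A. P x} = card {x\<in>A. P x} + (if P e then 1 else 0)"
proof -
  assume a: "finite A" "e \<notin> A"
  show ?thesis
  proof (cases "P e")
    case True
    then have "{x\<in>insert e A. P x} = insert e {x\<in>A. P x}" by auto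
    then show ?thesis using a True by simp
  next
    case False
    then have "{x\<in>insert e A. P x} = {x\<in>A. P x}" by auto
    then show ?thesis using False by simp
  qed
qed

lemma enter_insert: "finite A \<Longrightarrow> e \<notin> A \<Longrightarrow>
  enter Or (insert e A) X = enter Or A X + (if fst (Or e) \<notin> X \<and> snd (Or e) \<in> X then 1 else 0)"
  unfolding enter_def by (rule card_insert_filter)

lemma leave_insert: "finite A \<Longrightarrow> e \<notin> A \<Longrightarrow>
  leave Or (insert e A) X = leave Or A X + (if fst (Or e) \<in> X \<and> snd (Or e) \<notin> X then 1 else 0)"
  unfolding leave_def by (rule card_insert_filter)

lemma cross_walk:
  "dwalk F Or u w p \<Longrightarrow> distinct p \<Longrightarrow>
   int (enter Or (set p) X) - int (leave Or (set p) X) = (if w \<in> X then 1 else 0) - (if u \<in> X then 1 else 0)"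
proof (induction p arbitrary: u)
  case Nil then show ?case by (simp add: enter_def leave_def)
next
  case (Cons e p)
  have w: "dwalk F Or (snd (Or e)) w p" and fe: "fst (Or e) = u" using Cons.prems by auto
  have d: "distinct p" "e \<notin> set p" using Cons.prems by auto
  have IH: "int (enter Or (set p) X) - int (leave Or (set p) X) = (if w \<in> X then 1 else 0) - (if snd (Or e) \<in> X then 1 else 0)"
    using Cons.IH[OF w d(1)] .
  show ?case using IH fe d by (auto simp: enter_insert leave_insert)
qed

lemma enter_Un: "finite A \<Longrightarrow> finite B \<Longrightarrow> A \<inter> B = {} \<Longrightarrow> enter Or (A \<union> B) X = enter Or A X + enter Or B X"
  unfolding enter_def by (subst card_Un_disjoint[symmetric]) (auto intro: arg_cong[where f=card])

lemma leave_Un: "finite A \<Longrightarrow> finite B \<Longrightarrow> A \<inter> B = {} \<Longrightarrow> leave Or (A \<union> B) X = leave Or A X + leave Or B X"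
  unfolding leave_def by (subst card_Un_disjoint[symmetric]) (auto intro: arg_cong[where f=card])

lemma enter_mono: "finite B \<Longrightarrow> A \<subseteq> B \<Longrightarrow> enter Or A X \<le> enter Or B X"
  unfolding enter_def by (rule card_mono) auto

lemma enter_pos: "1 \<le> enter Or A X \<Longrightarrow> \<exists>e\<in>A. fst (Or e) \<notin> X \<and> snd (Or e) \<in> X"
  unfolding enter_def by (metis (no_types, lifting) card.empty empty_Collect_eq not_one_le_zero)

lemma dpath_walk: "dpath V F Or s t p \<Longrightarrow> dwalk F Or s t p \<and> distinct p"
  unfolding dpath_def by (auto simp: distinct_map)

lemma reach_cut:
  assumes "\<forall>e\<in>F. fst (Or e) \<in> V" "s \<in> V" "t \<in> V"
    and cut: "\<forall>X. X \<subseteq> V \<longrightarrow> t \<in> X \<longrightarrow> s \<notin> X \<longrightarrow> 1 \<le> enter Or F X"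
  shows "\<exists>p. dpath V F Or s t p"
proof -
  define R where "R = {v\<in>V. \<exists>p. dwalk F Or s v p}"
  have sR: "s \<in> R" unfolding R_def using assms(2) by (auto intro: exI[of _ "[]"])
  have "t \<in> R"
  proof (rule ccontr)
    assume "t \<notin> R"
    then have "1 \<le> enter Or F (V - R)" using cut assms sR by auto
    from enter_pos[OF this] obtain e where e: "e \<in> F" "fst (Or e) \<notin> V - R" "snd (Or e) \<in> V - R" by blast
    then have "fst (Or e) \<in> R" using assms(1) by auto
    then obtain p where "dwalk F Or s (fst (Or e)) p" unfolding R_def by auto
    then have "dwalk F Or s (snd (Or e)) (p @ [e])" using e by (simp add: dwalk_snoc)
    then have "snd (Or e) \<in> R" using e unfolding R_def by auto
    then show False using e by auto
  qed
  then obtain p where "dwalk F Or s t p" unfolding R_def by auto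
  from dwalk_shortcut[OF this] obtain q where "dwalk F Or s t q" "distinct (s # map (\<lambda>e. snd (Or e)) q)" by blast
  then show ?thesis unfolding dpath_def using assms(2) by blast
qed



definition arcs_in :: "'v set \<Rightarrow> 'e set \<Rightarrow> ('e \<Rightarrow> 'v \<times> 'v) \<Rightarrow> bool" where
  "arcs_in V F Or \<longleftrightarrow> (\<forall>e\<in>F. fst (Or e) \<in> V \<and> snd (Or e) \<in> V)"

lemma strong_cut:
  assumes "strongly_connected V E Or" "finite E" "X \<subseteq> V" "u \<in> V" "u \<notin> X" "v \<in> X"
  shows "1 \<le> enter Or E X"
proof -
  obtain p where p: "dpath V E Or u v p" using assms unfolding strongly_connected_def by blast
  then have w: "dwalk E Or u v p" "distinct p" by (auto dest: dpath_walk)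
  have "int (enter Or (set p) X) - int (leave Or (set p) X) = 1"
    using cross_walk[OF w, of X] assms by simp
  then have "1 \<le> enter Or (set p) X" by linarith
  also have "\<dots> \<le> enter Or E X" using enter_mono[OF assms(2) dwalk_set[OF w(1)]] .
  finally show ?thesis .
qed

lemma cut_strong:
  assumes "arcs_in V E Or"
    and "\<forall>X u v. X \<subseteq> V \<longrightarrow> u \<in> V \<longrightarrow> u \<notin> X \<longrightarrow> v \<in> X \<longrightarrow> 1 \<le> enter Or E X"
  shows "strongly_connected V E Or"
  unfolding strongly_connected_def
proof (intro ballI)
  fix u v assume uv: "u \<in> V" "v \<in> V"
  have a: "\<forall>e\<in>E. fst (Or e) \<in> V" using assms(1) unfolding arcs_in_def by blast
  have "\<forall>X. X \<subseteq> V \<longrightarrow> v \<in> X \<longrightarrow> u \<notin> X \<longrightarrow> 1 \<le> enter Or E X"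
  proof (intro allI impI)
    fix X assume X: "X \<subseteq> V" "v \<in> X" "u \<notin> X"
    show "1 \<le> enter Or E X" using assms(2)[rule_format, OF X(1) uv(1) X(3) X(2)] .
  qed
  then show "\<exists>es. dpath V E Or u v es" using reach_cut[OF a uv] by blast
qed

lemma dpath_mono: "dpath V F Or s t p \<Longrightarrow> F \<subseteq> G \<Longrightarrow> dpath V G Or s t p"
  by (auto simp: dpath_def intro: dwalk_mono)

lemma enter_split: "finite A \<Longrightarrow> enter Or A X = enter Or (A - B) X + enter Or (A \<inter> B) X"
proof -
  assume "finite A"
  have "A = (A - B) \<union> (A \<inter> B)" by auto
  then have "enter Or A X = enter Or ((A - B) \<union> (A \<inter> B)) X" by simp
  also have "\<dots> = enter Or (A - B) X + enter Or (A \<inter> B) X"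
    by (rule enter_Un) (use \<open>finite A\<close> in auto)
  finally show ?thesis .
qed

lemma leave_split: "finite A \<Longrightarrow> leave Or A X = leave Or (A - B) X + leave Or (A \<inter> B) X"
proof -
  assume "finite A"
  have "A = (A - B) \<union> (A \<inter> B)" by auto
  then have "leave Or A X = leave Or ((A - B) \<union> (A \<inter> B)) X" by simp
  also have "\<dots> = leave Or (A - B) X + leave Or (A \<inter> B) X"
    by (rule leave_Un) (use \<open>finite A\<close> in auto)
  finally show ?thesis .
qed

lemma enter_cong: "(\<And>e. e \<in> A \<Longrightarrow> Or e = Or' e) \<Longrightarrow> enter Or A X = enter Or' A X"
  unfolding enter_def by (rule arg_cong[where f=card]) auto

lemma leave_cong: "(\<And>e. e \<in> A \<Longrightarrow> Or e = Or' e) \<Longrightarrow> leave Or A X = leave Or' A X"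
  unfolding leave_def by (rule arg_cong[where f=card]) auto

lemma enter_swap: "(\<And>e. e \<in> A \<Longrightarrow> Or e = prod.swap (Or' e)) \<Longrightarrow> enter Or A X = leave Or' A X"
  unfolding enter_def leave_def by (rule arg_cong[where f=card]) auto

lemma leave_swap: "(\<And>e. e \<in> A \<Longrightarrow> Or e = prod.swap (Or' e)) \<Longrightarrow> leave Or A X = enter Or' A X"
  unfolding enter_def leave_def by (rule arg_cong[where f=card]) auto

definition flip :: "('e \<Rightarrow> 'v \<times> 'v) \<Rightarrow> 'e set \<Rightarrow> 'e \<Rightarrow> 'v \<times> 'v" where
  "flip Or P e = (if e \<in> P then prod.swap (Or e) else Or e)"

lemma enter_flip: "finite A \<Longrightarrow>
  enter (flip Or P) A X = enter Or (A - P) X + leave Or (A \<inter> P) X"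
  by (subst enter_split[where B=P]) (auto intro!: arg_cong2[where f="(+)"] enter_cong enter_swap simp: flip_def)

lemma leave_flip: "finite A \<Longrightarrow>
  leave (flip Or P) A X = leave Or (A - P) X + enter Or (A \<inter> P) X"
  by (subst leave_split[where B=P]) (auto intro!: arg_cong2[where f="(+)"] leave_cong leave_swap simp: flip_def)

lemma menger2:
  assumes fin: "finite E" and arcs: "arcs_in V E D" and sc: "strongly_connected V E D"
    and st: "s \<in> V" "t \<in> V"
    and cut2: "\<forall>X. X \<subseteq> V \<longrightarrow> t \<in> X \<longrightarrow> s \<notin> X \<longrightarrow> 2 \<le> enter D E X"
  shows "\<exists>P1 P2. dpath V E D s t P1 \<and> dpath V E D s t P2 \<and> set P1 \<inter> set P2 = {}"
proof -
  obtain P1 where P1: "dpath V E D s t P1" using sc st unfolding strongly_connected_def by blast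
  then have w1: "dwalk E D s t P1" "distinct P1" by (auto dest: dpath_walk)
  have P1E: "set P1 \<subseteq> E" using dwalk_set[OF w1(1)] .
  define R where "R = flip D (set P1)"
  have cr1: "int (enter D (set P1) X) - int (leave D (set P1) X) = 1" if "t \<in> X" "s \<notin> X" for X
    using cross_walk[OF w1, of X] that by simp
  have Rcut: "1 \<le> enter R E X" if X: "X \<subseteq> V" "t \<in> X" "s \<notin> X" for X
  proof -
    have a: "enter R E X = enter D (E - set P1) X + leave D (E \<inter> set P1) X"
      unfolding R_def by (rule enter_flip[OF fin])
    have b: "enter D E X = enter D (E - set P1) X + enter D (E \<inter> set P1) X"
      by (rule enter_split[OF fin])
    have c: "2 \<le> enter D E X" using cut2 X by blast
    have e: "E \<inter> set P1 = set P1" using P1E by auto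
    show ?thesis using a b c cr1[OF X(2,3)] unfolding e by linarith
  qed
  have Rarcs: "\<forall>e\<in>E. fst (R e) \<in> V" using arcs unfolding R_def flip_def arcs_in_def by auto
  obtain Q where Q: "dpath V E R s t Q"
    using reach_cut[OF Rarcs st] Rcut by blast
  then have wq: "dwalk E R s t Q" "distinct Q" by (auto dest: dpath_walk)
  have QE: "set Q \<subseteq> E" using dwalk_set[OF wq(1)] .
  define F where "F = (set P1 - set Q) \<union> (set Q - set P1)"
  have finF: "finite F" unfolding F_def by simp
  have FE: "F \<subseteq> E" unfolding F_def using P1E QE by auto
  have crF: "int (enter D F X) - int (leave D F X) = 2" if X: "t \<in> X" "s \<notin> X" for X
  proof -
    have crQ: "int (enter R (set Q) X) - int (leave R (set Q) X) = 1"
      using cross_walk[OF wq, of X] X by simp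
    have q1: "enter R (set Q) X = enter D (set Q - set P1) X + leave D (set Q \<inter> set P1) X"
      unfolding R_def by (rule enter_flip) simp
    have q2: "leave R (set Q) X = leave D (set Q - set P1) X + enter D (set Q \<inter> set P1) X"
      unfolding R_def by (rule leave_flip) simp
    have p1: "enter D (set P1) X = enter D (set P1 - set Q) X + enter D (set P1 \<inter> set Q) X"
      by (rule enter_split) simp
    have p2: "leave D (set P1) X = leave D (set P1 - set Q) X + leave D (set P1 \<inter> set Q) X"
      by (rule leave_split) simp
    have f1: "enter D F X = enter D (set P1 - set Q) X + enter D (set Q - set P1) X"
      unfolding F_def by (rule enter_Un) auto
    have f2: "leave D F X = leave D (set P1 - set Q) X + leave D (set Q - set P1) X"
      unfolding F_def by (rule leave_Un) auto
    have "set Q \<inter> set P1 = set P1 \<inter> set Q" by auto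
    then show ?thesis using crQ q1 q2 p1 p2 f1 f2 cr1[OF X] by (simp only:)
  qed
  have Farcs: "\<forall>e\<in>F. fst (D e) \<in> V" using arcs FE unfolding arcs_in_def by auto
  have "\<forall>X. X \<subseteq> V \<longrightarrow> t \<in> X \<longrightarrow> s \<notin> X \<longrightarrow> 1 \<le> enter D F X"
  proof (intro allI impI)
    fix X assume X: "X \<subseteq> V" "t \<in> X" "s \<notin> X"
    show "1 \<le> enter D F X" using crF[OF X(2,3)] by linarith
  qed
  then obtain PA where PA: "dpath V F D s t PA"
    using reach_cut[OF Farcs st] by blast
  then have wa: "dwalk F D s t PA" "distinct PA" by (auto dest: dpath_walk)
  have PAF: "set PA \<subseteq> F" using dwalk_set[OF wa(1)] .
  define F' where "F' = F - set PA"
  have crF': "int (enter D F' X) - int (leave D F' X) = 1" if X: "t \<in> X" "s \<notin> X" for X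
  proof -
    have a: "enter D F X = enter D F' X + enter D (F \<inter> set PA) X"
      unfolding F'_def by (rule enter_split[OF finF])
    have b: "leave D F X = leave D F' X + leave D (F \<inter> set PA) X"
      unfolding F'_def by (rule leave_split[OF finF])
    have "F \<inter> set PA = set PA" using PAF by auto
    then have "int (enter D (set PA) X) - int (leave D (set PA) X) = 1" using cross_walk[OF wa, of X] X by simp
    then show ?thesis using a b crF[OF X] \<open>F \<inter> set PA = set PA\<close> by (simp only:)
  qed
  have F'arcs: "\<forall>e\<in>F'. fst (D e) \<in> V" using Farcs unfolding F'_def by auto
  have "\<forall>X. X \<subseteq> V \<longrightarrow> t \<in> X \<longrightarrow> s \<notin> X \<longrightarrow> 1 \<le> enter D F' X"
  proof (intro allI impI)
    fix X assume X: "X \<subseteq> V" "t \<in> X" "s \<notin> X"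
    show "1 \<le> enter D F' X" using crF'[OF X(2,3)] by linarith
  qed
  then obtain PB where PB: "dpath V F' D s t PB"
    using reach_cut[OF F'arcs st] by blast
  have PBF: "set PB \<subseteq> F'" using dwalk_set[OF conjunct1[OF dpath_walk[OF PB]]] .
  have "set PA \<inter> set PB = {}" using PBF unfolding F'_def by auto
  moreover have "dpath V E D s t PA" using dpath_mono[OF PA FE] .
  moreover have "F' \<subseteq> E" using FE unfolding F'_def by auto
  moreover have "dpath V E D s t PB" using dpath_mono[OF PB \<open>F' \<subseteq> E\<close>] .
  ultimately show ?thesis by blast
qed



lemma card_filter_sum: "finite A \<Longrightarrow> card {e\<in>A. P e} = (\<Sum>e\<in>A. if P e then 1 else 0)"
  by (simp add: sum.inter_filter[symmetric])

lemma enter_submod: "finite E \<Longrightarrow>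
  enter Or E (T \<union> T') + enter Or E (T \<inter> T') \<le> enter Or E T + enter Or E T'"
  unfolding enter_def
  by (simp add: card_filter_sum sum.distrib[symmetric] sum_mono)

lemma sum_indeg:
  assumes "finite E" "finite X"
  shows "(\<Sum>v\<in>X. indeg E Or v) = card {e\<in>E. fst (Or e) \<in> X \<and> snd (Or e) \<in> X} + enter Or E X"
proof -
  have "(\<Sum>v\<in>X. indeg E Or v) = card (\<Union>v\<in>X. {e\<in>E. snd (Or e) = v})"
    unfolding indeg_def by (rule card_UN_disjoint[symmetric]) (use assms in auto)
  also have "(\<Union>v\<in>X. {e\<in>E. snd (Or e) = v}) =
      {e\<in>E. fst (Or e) \<in> X \<and> snd (Or e) \<in> X} \<union> {e\<in>E. fst (Or e) \<notin> X \<and> snd (Or e) \<in> X}"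
    by auto
  also have "card \<dots> = card {e\<in>E. fst (Or e) \<in> X \<and> snd (Or e) \<in> X} + enter Or E X"
    unfolding enter_def by (rule card_Un_disjoint) (use assms in auto)
  finally show ?thesis .
qed

lemma internal_orient: "orientation E ends Or \<Longrightarrow>
  {e\<in>E. fst (Or e) \<in> X \<and> snd (Or e) \<in> X} = {e\<in>E. fst (ends e) \<in> X \<and> snd (ends e) \<in> X}"
  unfolding orientation_def by (metis (no_types, lifting) fst_swap snd_swap)

lemma enter_all: assumes "arcs_in V E Or" shows "enter Or E V = 0"
proof -
  have "{e\<in>E. fst (Or e) \<notin> V \<and> snd (Or e) \<in> V} = {}" using assms unfolding arcs_in_def by auto
  then show ?thesis unfolding enter_def by (simp only: card.empty)
qed

lemma orient_arcs: "ugraph V E ends \<Longrightarrow> orientation E ends Or \<Longrightarrow> arcs_in V E Or"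
  unfolding ugraph_def orientation_def arcs_in_def by (metis fst_swap snd_swap)

lemma family_nonneg:
  fixes g :: "'a \<Rightarrow> int"
  assumes "finite FF" "\<forall>A\<in>FF. P A"
    and un: "\<And>A B. P A \<Longrightarrow> P B \<Longrightarrow> A \<inter> B \<noteq> {} \<Longrightarrow> P (A \<union> B)"
    and fin: "\<And>A. P A \<Longrightarrow> finite A" and pos: "\<And>A. P A \<Longrightarrow> 0 \<le> sum g A"
  shows "0 \<le> sum g (\<Union>FF)"
  using assms(1,2)
proof (induction "card FF" arbitrary: FF rule: less_induct)
  case less
  show ?case
  proof (cases "FF = {}")
    case True then show ?thesis by simp
  next
    case False
    then obtain A where A: "A \<in> FF" by blast
    show ?thesis
    proof (cases "\<exists>B\<in>FF - {A}. A \<inter> B \<noteq> {}")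
      case True
      then obtain B where B: "B \<in> FF" "B \<noteq> A" "A \<inter> B \<noteq> {}" by blast
      define H where "H = insert (A \<union> B) (FF - {A, B})"
      have c1: "card (FF - {A, B}) = card FF - 2" using A B less.prems(1) by (simp add: card_Diff_subset)
      have c2: "card FF \<ge> 2" using A B less.prems(1)
        by (metis card_2_iff empty_subsetI insert_subset card_mono)
      have "card H \<le> card (FF - {A, B}) + 1" unfolding H_def
        by (simp add: card_insert_le_m1 less.prems(1)) 
      then have cH: "card H < card FF" using c1 c2 by linarith
      have fH: "finite H" unfolding H_def using less.prems(1) by simp
      have pH: "\<forall>X\<in>H. P X" unfolding H_def using less.prems(2) A B un by auto
      have "\<Union>H = \<Union>FF" unfolding H_def using A B by auto
      then show ?thesis using less.hyps[OF cH fH pH] by simp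
    next
      case False
      define G where "G = FF - {A}"
      have disj: "A \<inter> \<Union>G = {}" using False unfolding G_def by auto
      have fG: "finite G" "\<forall>X\<in>G. P X" unfolding G_def using less.prems by auto
      have cG: "card G < card FF" unfolding G_def by (rule card_Diff1_less[OF less.prems(1) A])
      have "\<Union>FF = A \<union> \<Union>G" unfolding G_def using A by auto
      moreover have "sum g (A \<union> \<Union>G) = sum g A + sum g (\<Union>G)"
        by (rule sum.union_disjoint) (use fin A less.prems fG disj in auto)
      ultimately show ?thesis using less.hyps[OF cG fG] pos A less.prems(2) by simp
    qed
  qed
qed

locale twoD =
  fixes V :: "'v set" and E :: "'e set" and ends D D'
  assumes ug: "ugraph V E ends" and sD: "strong_orientation V E ends D"
    and sD': "strong_orientation V E ends D'"
begin

lemma finE: "finite E" and finV: "finite V" using ug unfolding ugraph_def by auto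

lemma scD: "strongly_connected V E D" and scD': "strongly_connected V E D'"
  using sD sD' unfolding strong_orientation_def by auto

lemma arcsD: "arcs_in V E D" and arcsD': "arcs_in V E D'"
  using sD sD' ug orient_arcs unfolding strong_orientation_def by blast+

definition tight where "tight T \<longleftrightarrow> T \<subseteq> V \<and> T \<noteq> {} \<and> T \<noteq> V \<and> enter D E T \<le> 1"

definition mu where "mu X = (\<Sum>v\<in>X. int (indeg E D' v) - int (indeg E D v))"

lemma mu_enter: assumes "X \<subseteq> V" shows "mu X = int (enter D' E X) - int (enter D E X)"
proof -
  have fX: "finite X" using finV assms finite_subset by blast
  have o: "orientation E ends D" "orientation E ends D'" using sD sD' unfolding strong_orientation_def by auto
  have "mu X = int (\<Sum>v\<in>X. indeg E D' v) - int (\<Sum>v\<in>X. indeg E D v)"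
    unfolding mu_def by (simp add: sum_subtractf)
  also have "\<dots> = int (enter D' E X) - int (enter D E X)"
    using sum_indeg[OF finE fX, of D] sum_indeg[OF finE fX, of D'] internal_orient[OF o(1), of X]
      internal_orient[OF o(2), of X] by simp
  finally show ?thesis .
qed

lemma mu_V: "mu V = 0"
  using mu_enter[of V] enter_all[OF arcsD] enter_all[OF arcsD'] by simp

lemma mu_compl: assumes "X \<subseteq> V" shows "mu (V - X) = - mu X"
proof -
  have "mu V = mu (V - X) + mu X" unfolding mu_def
    by (rule sum.subset_diff[OF assms finV])
  then show ?thesis using mu_V by simp
qed

lemma enter_pos_D: "X \<subseteq> V \<Longrightarrow> X \<noteq> {} \<Longrightarrow> X \<noteq> V \<Longrightarrow> 1 \<le> enter D E X"
  using strong_cut[OF scD finE] by blast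

lemma enter_pos_D': "X \<subseteq> V \<Longrightarrow> X \<noteq> {} \<Longrightarrow> X \<noteq> V \<Longrightarrow> 1 \<le> enter D' E X"
  using strong_cut[OF scD' finE] by blast

lemma mu_tight: assumes "tight T" shows "0 \<le> mu T"
proof -
  have T: "T \<subseteq> V" "T \<noteq> {}" "T \<noteq> V" "enter D E T \<le> 1" using assms unfolding tight_def by auto
  have "1 \<le> enter D' E T" using enter_pos_D'[OF T(1-3)] .
  then show ?thesis using mu_enter[OF T(1)] T(4) by linarith
qed

lemma tight_inter: assumes "tight T" "tight T'" "T \<inter> T' \<noteq> {}" "T \<union> T' \<noteq> V"
  shows "tight (T \<inter> T')"
proof -
  have "1 \<le> enter D E (T \<union> T')" using assms by (intro enter_pos_D) (auto simp: tight_def)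
  moreover have "enter D E (T \<union> T') + enter D E (T \<inter> T') \<le> enter D E T + enter D E T'"
    by (rule enter_submod[OF finE])
  ultimately show ?thesis using assms unfolding tight_def by auto
qed

lemma tight_union: assumes "tight T" "tight T'" "T \<inter> T' \<noteq> {}" "T \<union> T' \<noteq> V"
  shows "tight (T \<union> T')"
proof -
  have "1 \<le> enter D E (T \<inter> T')" using assms by (intro enter_pos_D) (auto simp: tight_def)
  moreover have "enter D E (T \<union> T') + enter D E (T \<inter> T') \<le> enter D E T + enter D E T'"
    by (rule enter_submod[OF finE])
  ultimately show ?thesis using assms unfolding tight_def by auto
qed

definition CC where "CC S \<longleftrightarrow> S \<subseteq> V \<and> S \<noteq> {} \<and> (\<forall>x\<in>V - S. \<exists>T. tight T \<and> S \<subseteq> T \<and> x \<notin> T)"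

lemma CC_mu: assumes "CC S" shows "0 \<le> mu S"
proof -
  define P where "P A \<longleftrightarrow> (\<exists>T. tight T \<and> S \<subseteq> T \<and> A = V - T)" for A
  define FF where "FF = (\<lambda>T. V - T) ` {T. tight T \<and> S \<subseteq> T}"
  have "{T. tight T \<and> S \<subseteq> T} \<subseteq> Pow V" unfolding tight_def by auto
  then have fFF: "finite FF" unfolding FF_def using finV finite_subset by blast
  have pFF: "\<forall>A\<in>FF. P A" unfolding FF_def P_def by auto
  have unFF: "\<Union>FF = V - S"
  proof
    show "\<Union>FF \<subseteq> V - S" unfolding FF_def by auto
    show "V - S \<subseteq> \<Union>FF" using assms unfolding CC_def FF_def by blast
  qed
  define g where "g v = - (int (indeg E D' v) - int (indeg E D v))" for v
  have gmu: "sum g A = - mu A" for A unfolding g_def mu_def by (simp add: sum_negf[symmetric])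
  have "0 \<le> sum g (\<Union>FF)"
  proof (rule family_nonneg[OF fFF pFF])
    fix A B assume "P A" "P B" "A \<inter> B \<noteq> {}"
    then obtain T T' where T: "tight T" "S \<subseteq> T" "A = V - T" and T': "tight T'" "S \<subseteq> T'" "B = V - T'"
      unfolding P_def by blast
    have "S \<noteq> {}" using assms unfolding CC_def by auto
    then have "T \<inter> T' \<noteq> {}" using T T' by auto
    moreover have "T \<union> T' \<noteq> V" using \<open>A \<inter> B \<noteq> {}\<close> T T' by auto
    ultimately have "tight (T \<inter> T')" using tight_inter T T' by blast
    moreover have "A \<union> B = V - (T \<inter> T')" using T T' by auto
    ultimately show "P (A \<union> B)" unfolding P_def using T T' by blast
  next
    fix A assume "P A" then show "finite A" unfolding P_def using finV by auto
  next
    fix A assume "P A"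
    then obtain T where T: "tight T" "A = V - T" unfolding P_def by blast
    then have "sum g A = mu T" using gmu mu_compl[of T] unfolding tight_def by simp
    then show "0 \<le> sum g A" using mu_tight[OF T(1)] by simp
  qed
  then have "0 \<le> - mu (V - S)" using unFF gmu by simp
  then show ?thesis using mu_compl[of S] assms unfolding CC_def by simp
qed

lemma CC_union: assumes "CC S" "CC S'" "S \<inter> S' \<noteq> {}" shows "CC (S \<union> S')"
  unfolding CC_def
proof (intro conjI ballI)
  show "S \<union> S' \<subseteq> V" "S \<union> S' \<noteq> {}" using assms unfolding CC_def by auto
  fix x assume x: "x \<in> V - (S \<union> S')"
  obtain T where T: "tight T" "S \<subseteq> T" "x \<notin> T" using assms(1) x unfolding CC_def by blast
  obtain T' where T': "tight T'" "S' \<subseteq> T'" "x \<notin> T'" using assms(2) x unfolding CC_def by blast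
  have "T \<inter> T' \<noteq> {}" using assms(3) T T' by auto
  moreover have "T \<union> T' \<noteq> V" using x T T' by auto
  ultimately have "tight (T \<union> T')" using tight_union T T' by blast
  then show "\<exists>T. tight T \<and> S \<union> S' \<subseteq> T \<and> x \<notin> T" using T T' by blast
qed

lemma family_CC: assumes "finite GG" "\<forall>S\<in>GG. CC S" shows "0 \<le> mu (\<Union>GG)"
  unfolding mu_def
proof (rule family_nonneg[OF assms])
  fix A B assume "CC A" "CC B" "A \<inter> B \<noteq> {}" then show "CC (A \<union> B)" by (rule CC_union)
next
  fix A assume "CC A" then show "finite A" unfolding CC_def using finV by (auto intro: finite_subset)
next
  fix A assume "CC A" then show "0 \<le> (\<Sum>v\<in>A. int (indeg E D' v) - int (indeg E D v))"
    using CC_mu unfolding mu_def by blast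
qed

end



lemma vec_sorted: "sorted_wrt (\<ge>) (indeg_vector V E Or)"
  unfolding indeg_vector_def by (simp add: sorted_wrt_rev)

lemma vec_length: "finite V \<Longrightarrow> length (indeg_vector V E Or) = card V"
  unfolding indeg_vector_def by (metis length_rev mset_sorted_list_of_multiset size_image_mset size_mset size_mset_set)

lemma vec_sum: "sum_list (map h (indeg_vector V E Or)) = (\<Sum>v\<in>V. h (indeg E Or v))"
proof -
  have "sum_list (map h (indeg_vector V E Or)) = sum_mset (mset (map h (indeg_vector V E Or)))"
    by (rule sum_mset_sum_list[symmetric])
  also have "\<dots> = sum_mset (image_mset h (image_mset (indeg E Or) (mset_set V)))"
    unfolding indeg_vector_def by simp
  also have "\<dots> = (\<Sum>v\<in>V. h (indeg E Or v))"
    by (simp add: sum_unfold_sum_mset image_mset.compositionality comp_def)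
  finally show ?thesis .
qed

lemma sorted_desc_drop_le:
  fixes ys :: "nat list"
  assumes "sorted_wrt (\<ge>) ys" "i < length ys" "y \<in> set (drop i ys)"
  shows "y \<le> ys ! i"
proof -
  have d: "drop i ys = ys ! i # drop (Suc i) ys" using assms(2) by (rule Cons_nth_drop_Suc[symmetric])
  have "sorted_wrt (\<ge>) (drop i ys)" using assms(1) by (rule sorted_wrt_drop)
  then show ?thesis using assms(3) unfolding d by auto
qed

lemma lex_sum:
  fixes xs ys :: "nat list"
  assumes sy: "sorted_wrt (\<ge>) ys" and i: "i < length xs" "i < length ys" "take i xs = take i ys" "ys ! i < xs ! i"
  shows "sum_list (map (\<lambda>x. x - (xs ! i - 1)) ys) < sum_list (map (\<lambda>x. x - (xs ! i - 1)) xs)"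
proof -
  define c where "c = xs ! i - 1"
  define h where "h x = x - c" for x :: nat
  have ys0: "sum_list (map h (drop i ys)) = 0"
  proof -
    have "\<forall>y\<in>set (drop i ys). y \<le> c"
      using sorted_desc_drop_le[OF sy i(2)] i(4) unfolding c_def by fastforce
    then show ?thesis unfolding h_def by simp
  qed
  have xs1: "1 \<le> sum_list (map h (drop i xs))"
  proof -
    have "drop i xs = xs ! i # drop (Suc i) xs" using i(1) by (rule Cons_nth_drop_Suc[symmetric])
    moreover have "h (xs ! i) = 1" unfolding h_def c_def using i(4) by simp
    ultimately show ?thesis by simp
  qed
  have "sum_list (map h ys) = sum_list (map h (take i ys)) + sum_list (map h (drop i ys))"
    by (metis append_take_drop_id map_append sum_list_append)
  moreover have "sum_list (map h xs) = sum_list (map h (take i xs)) + sum_list (map h (drop i xs))"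
    by (metis append_take_drop_id map_append sum_list_append)
  ultimately have "sum_list (map h ys) < sum_list (map h xs)" using ys0 xs1 i(3) by simp
  then show ?thesis unfolding h_def c_def .
qed

lemma sorted_desc_split:
  fixes xs :: "nat list"
  shows "sorted_wrt (\<ge>) xs \<Longrightarrow> xs = filter (\<lambda>x. b < x) xs @ filter (\<lambda>x. x = b) xs @ filter (\<lambda>x. x < b) xs"
proof (induction xs)
  case Nil then show ?case by simp
next
  case (Cons x xs)
  have le: "\<forall>y\<in>set xs. y \<le> x" and s: "sorted_wrt (\<ge>) xs" using Cons.prems by auto
  have IH: "xs = filter (\<lambda>x. b < x) xs @ filter (\<lambda>x. x = b) xs @ filter (\<lambda>x. x < b) xs"
    using Cons.IH[OF s] .
  show ?case
  proof (cases "b < x")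
    case True then show ?thesis using IH by simp
  next
    case False
    then have f1: "filter (\<lambda>x. b < x) xs = []" using le by (auto simp: filter_empty_conv)
    show ?thesis
    proof (cases "x = b")
      case True then show ?thesis using IH f1 by simp
    next
      case False2: False
      then have xb: "x < b" using False by simp
      then have f2: "filter (\<lambda>x. x = b) xs = []" using le by (auto simp: filter_empty_conv)
      have "filter (\<lambda>x. x < b) xs = xs" using le xb by (auto simp: filter_id_conv)
      then show ?thesis using xb f1 f2 by simp
    qed
  qed
qed

lemma sorted_desc_eq:
  fixes xs ys :: "nat list"
  assumes "sorted_wrt (\<ge>) xs" "sorted_wrt (\<ge>) ys" "mset xs = mset ys"
  shows "xs = ys"
proof -
  have a: "sorted (rev xs)" "sorted (rev ys)" using assms(1,2) by (simp_all add: sorted_wrt_rev)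
  have "mset (rev ys) = mset (rev xs)" using assms(3) by simp
  then have "sort (rev xs) = rev ys" using properties_for_sort a(2) by blast
  moreover have "sort (rev xs) = rev xs" using a(1) by (rule sorted_sort_id)
  ultimately show ?thesis by simp
qed

lemma lex_from_counts:
  fixes M M2 :: "nat multiset"
  assumes f: "filter_mset (\<lambda>x. b < x) M = filter_mset (\<lambda>x. b < x) M2"
    and c: "size (filter_mset (\<lambda>x. x = b) M2) < size (filter_mset (\<lambda>x. x = b) M)"
    and sz: "size M = size M2"
  shows "lex_less (rev (sorted_list_of_multiset M2)) (rev (sorted_list_of_multiset M))"
proof -
  define xs where "xs = rev (sorted_list_of_multiset M)"
  define ys where "ys = rev (sorted_list_of_multiset M2)"
  have sx: "sorted_wrt (\<ge>) xs" and sy: "sorted_wrt (\<ge>) ys" unfolding xs_def ys_def by (simp_all add: sorted_wrt_rev)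
  have mx: "mset xs = M" and my: "mset ys = M2" unfolding xs_def ys_def by simp_all
  define A where "A = filter (\<lambda>x. b < x) xs"
  have A2: "filter (\<lambda>x. b < x) ys = A"
    unfolding A_def by (rule sorted_desc_eq) (use sx sy mx my f in \<open>simp_all add: sorted_wrt_filter\<close>)
  define q where "q = length (filter (\<lambda>x. x = b) xs)"
  define q2 where "q2 = length (filter (\<lambda>x. x = b) ys)"
  have rx: "filter (\<lambda>x. x = b) xs = replicate q b" unfolding q_def
    by (rule replicate_length_same[symmetric]) auto
  have ry: "filter (\<lambda>x. x = b) ys = replicate q2 b" unfolding q2_def
    by (rule replicate_length_same[symmetric]) auto
  have qq: "q2 < q" unfolding q_def q2_def using c mx my
    by (metis mset_filter size_mset)
  define C where "C = filter (\<lambda>x. x < b) xs"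
  define C2 where "C2 = filter (\<lambda>x. x < b) ys"
  have xs_eq: "xs = A @ replicate q b @ C" using sorted_desc_split[OF sx, of b] rx unfolding A_def C_def by simp
  have ys_eq: "ys = A @ replicate q2 b @ C2" using sorted_desc_split[OF sy, of b] ry A2 unfolding C2_def by simp
  have "length xs = length ys" using sz mx my by (metis size_mset)
  then have lC2: "length C2 = q - q2 + length C" using xs_eq ys_eq qq by simp
  then have C2ne: "C2 \<noteq> []" using qq by auto
  have C2lt: "C2 ! 0 < b" using C2ne unfolding C2_def
    by (metis (mono_tags, lifting) length_greater_0_conv mem_Collect_eq nth_mem set_filter)
  define i where "i = length A + q2"
  have l1: "i < length xs" unfolding i_def using xs_eq qq by simp
  have l2: "i < length ys" unfolding i_def using ys_eq C2ne by simp
  have l3: "take i xs = take i ys"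
  proof -
    have "take i xs = A @ take q2 (replicate q b @ C)" unfolding i_def xs_eq by simp
    also have "\<dots> = A @ replicate q2 b" using qq by (simp add: take_append min_def)
    finally have 1: "take i xs = A @ replicate q2 b" .
    have "take i ys = A @ replicate q2 b" unfolding i_def ys_eq by simp
    then show ?thesis using 1 by simp
  qed
  have l4: "ys ! i < xs ! i"
  proof -
    have "xs ! i = b" unfolding i_def xs_eq using qq by (simp add: nth_append)
    moreover have "ys ! i = C2 ! 0" unfolding i_def ys_eq by (simp add: nth_append)
    ultimately show ?thesis using C2lt by simp
  qed
  have "lex_less ys xs" unfolding lex_less_def using l1 l2 l3 l4 by (intro exI[of _ i]) simp
  then show ?thesis unfolding xs_def ys_def .
qed



context twoD
begin

lemma hard:
  assumes nip: "\<not> (\<exists>s\<in>V. \<exists>t\<in>V. indeg E D t \<ge> indeg E D s + 2 \<and>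
          (\<exists>P1 P2. dpath V E D s t P1 \<and> dpath V E D s t P2 \<and> set P1 \<inter> set P2 = {}))"
  shows "\<not> lex_less (indeg_vector V E D') (indeg_vector V E D)"
proof
  assume "lex_less (indeg_vector V E D') (indeg_vector V E D)"
  then obtain i where i: "i < length (indeg_vector V E D')" "i < length (indeg_vector V E D)"
    "take i (indeg_vector V E D') = take i (indeg_vector V E D)"
    "indeg_vector V E D' ! i < indeg_vector V E D ! i"
    unfolding lex_less_def by blast
  define f where "f = indeg E D"
  define g where "g = indeg E D'"
  define \<beta> where "\<beta> = indeg_vector V E D ! i"
  define c where "c = \<beta> - 1"
  have "sum_list (map (\<lambda>x. x - c) (indeg_vector V E D')) < sum_list (map (\<lambda>x. x - c) (indeg_vector V E D))"
    unfolding c_def \<beta>_def using lex_sum[OF vec_sorted i(2) i(1) i(3)[symmetric] i(4)] .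
  then have sums: "(\<Sum>v\<in>V. g v - c) < (\<Sum>v\<in>V. f v - c)"
    unfolding f_def g_def vec_sum .
  have b1: "1 \<le> \<beta>" using i(4) unfolding \<beta>_def by simp
  define lam2 where "lam2 a b \<longleftrightarrow> (\<forall>X. X \<subseteq> V \<longrightarrow> b \<in> X \<longrightarrow> a \<notin> X \<longrightarrow> 2 \<le> enter D E X)" for a b
  have trans: "lam2 a t" if "lam2 a b" "lam2 b t" for a b t
    unfolding lam2_def
  proof (intro allI impI)
    fix X assume X: "X \<subseteq> V" "t \<in> X" "a \<notin> X"
    show "2 \<le> enter D E X"
    proof (cases "b \<in> X")
      case True then show ?thesis using that(1) X unfolding lam2_def by blast
    next
      case False then show ?thesis using that(2) X unfolding lam2_def by blast
    qed
  qed
  have refl: "lam2 a a" for a unfolding lam2_def by blast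
  define Z where "Z = {z\<in>V. \<exists>t\<in>V. \<beta> \<le> f t \<and> lam2 z t}"
  have ZV: "Z \<subseteq> V" unfolding Z_def by auto
  have finZ: "finite Z" using finV ZV finite_subset by blast
  have Z1: "v \<in> Z" if "v \<in> V" "\<beta> \<le> f v" for v
    unfolding Z_def using that refl by blast
  have Z2: "c \<le> f z" if z: "z \<in> Z" for z
  proof (rule ccontr)
    assume "\<not> c \<le> f z"
    then have fz: "f z + 2 \<le> \<beta>" unfolding c_def using b1 by linarith
    obtain t where t: "t \<in> V" "\<beta> \<le> f t" "lam2 z t" using z unfolding Z_def by blast
    have zV: "z \<in> V" using z ZV by auto
    have "\<exists>P1 P2. dpath V E D z t P1 \<and> dpath V E D z t P2 \<and> set P1 \<inter> set P2 = {}"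
      by (rule menger2[OF finE arcsD scD zV t(1)]) (use t(3) in \<open>unfold lam2_def\<close>)
    moreover have "indeg E D t \<ge> indeg E D z + 2" using fz t(2) unfolding f_def by linarith
    ultimately show False using nip zV t(1) by blast
  qed
  have Z3: "0 \<le> mu Z"
  proof -
    define S where "S b = {v\<in>V. \<forall>T. tight T \<and> b \<in> T \<longrightarrow> v \<in> T}" for b
    have bS: "b \<in> S b" if "b \<in> Z" for b using that ZV unfolding S_def by auto
    have CS: "CC (S b)" if b: "b \<in> Z" for b
      unfolding CC_def
    proof (intro conjI ballI)
      show "S b \<subseteq> V" unfolding S_def by auto
      show "S b \<noteq> {}" using bS[OF b] by auto
      fix x assume x: "x \<in> V - S b"
      then obtain T where T: "tight T" "b \<in> T" "x \<notin> T" unfolding S_def by auto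
      have "S b \<subseteq> T" unfolding S_def using T by auto
      then show "\<exists>T. tight T \<and> S b \<subseteq> T \<and> x \<notin> T" using T by blast
    qed
    have SZ: "S b \<subseteq> Z" if b: "b \<in> Z" for b
    proof
      fix x assume x: "x \<in> S b"
      then have xV: "x \<in> V" unfolding S_def by auto
      show "x \<in> Z"
      proof (rule ccontr)
        assume xZ: "x \<notin> Z"
        obtain t where t: "t \<in> V" "\<beta> \<le> f t" "lam2 b t" using b unfolding Z_def by blast
        have "\<not> lam2 x b"
        proof
          assume "lam2 x b"
          then have "lam2 x t" using trans t(3) by blast
          then show False using xZ xV t unfolding Z_def by blast
        qed
        then obtain X where X: "X \<subseteq> V" "b \<in> X" "x \<notin> X" "\<not> 2 \<le> enter D E X"
          unfolding lam2_def by blast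
        have "tight X" unfolding tight_def using X xV by auto
        then have "x \<in> X" using x X(2) unfolding S_def by blast
        then show False using X(3) by simp
      qed
    qed
    have "Z = \<Union>(S ` Z)" using bS SZ by blast
    moreover have "0 \<le> mu (\<Union>(S ` Z))" by (rule family_CC) (use finZ CS in auto)
    ultimately show ?thesis by simp
  qed
  have Zg: "(\<Sum>v\<in>Z. g v) \<le> card Z * c + (\<Sum>v\<in>V. g v - c)"
  proof -
    have "(\<Sum>v\<in>Z. g v) \<le> (\<Sum>v\<in>Z. c + (g v - c))" by (intro sum_mono) arith
    also have "\<dots> = card Z * c + (\<Sum>v\<in>Z. g v - c)" by (simp add: sum.distrib)
    also have "(\<Sum>v\<in>Z. g v - c) \<le> (\<Sum>v\<in>V. g v - c)" by (rule sum_mono2[OF finV ZV]) simp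
    finally show ?thesis by simp
  qed
  have Zf: "(\<Sum>v\<in>Z. f v) = card Z * c + (\<Sum>v\<in>V. f v - c)"
  proof -
    have "(\<Sum>v\<in>Z. f v) = (\<Sum>v\<in>Z. c + (f v - c))" by (rule sum.cong) (use Z2 in auto)
    also have "\<dots> = card Z * c + (\<Sum>v\<in>Z. f v - c)" by (simp add: sum.distrib)
    also have "(\<Sum>v\<in>Z. f v - c) = (\<Sum>v\<in>V. f v - c)"
    proof (rule sym, rule sum.mono_neutral_right[OF finV ZV], rule ballI)
      fix v assume v: "v \<in> V - Z"
      then have "f v < \<beta>" using Z1 by force
      then show "f v - c = 0" unfolding c_def by simp
    qed
    finally show ?thesis .
  qed
  have "mu Z = int (\<Sum>v\<in>Z. g v) - int (\<Sum>v\<in>Z. f v)"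
    unfolding mu_def f_def g_def by (simp add: sum_subtractf)
  then show False using Z3 Zg Zf sums by linarith
qed

end

lemma easy:
  assumes ug: "ugraph V E ends" and sD: "strong_orientation V E ends D"
    and st: "s \<in> V" "t \<in> V" "indeg E D t \<ge> indeg E D s + 2"
    and P: "dpath V E D s t P1" "dpath V E D s t P2" "set P1 \<inter> set P2 = {}"
  shows "strong_orientation V E ends (flip D (set P1)) \<and>
    lex_less (indeg_vector V E (flip D (set P1))) (indeg_vector V E D)"
proof -
  have finE: "finite E" and finV: "finite V" using ug unfolding ugraph_def by auto
  have oD: "orientation E ends D" and scD: "strongly_connected V E D"
    using sD unfolding strong_orientation_def by auto
  define D2 where "D2 = flip D (set P1)"
  have w1: "dwalk E D s t P1" "distinct P1" using P(1) by (auto dest: dpath_walk)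
  have w2: "dwalk E D s t P2" "distinct P2" using P(2) by (auto dest: dpath_walk)
  have P1E: "set P1 \<subseteq> E" using dwalk_set[OF w1(1)] .
  have P2E: "set P2 \<subseteq> E" using dwalk_set[OF w2(1)] .
  have EP1: "E \<inter> set P1 = set P1" using P1E by auto
  have o2: "orientation E ends D2" using oD unfolding orientation_def D2_def flip_def by auto
  have arcs2: "arcs_in V E D2" using orient_arcs[OF ug o2] .
  have cr1: "int (enter D (set P1) X) - int (leave D (set P1) X) = (if t \<in> X then 1 else 0) - (if s \<in> X then 1 else 0)" for X
    using cross_walk[OF w1] .
  have cr2: "int (enter D (set P2) X) - int (leave D (set P2) X) = (if t \<in> X then 1 else 0) - (if s \<in> X then 1 else 0)" for X
    using cross_walk[OF w2] .
  have e2: "enter D2 E X = enter D (E - set P1) X + leave D (set P1) X" for X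
    unfolding D2_def using enter_flip[OF finE, of D "set P1" X] EP1 by simp
  have e1: "enter D E X = enter D (E - set P1) X + enter D (set P1) X" for X
    using enter_split[OF finE, of D X "set P1"] EP1 by simp
  have cut: "\<forall>X u v. X \<subseteq> V \<longrightarrow> u \<in> V \<longrightarrow> u \<notin> X \<longrightarrow> v \<in> X \<longrightarrow> 1 \<le> enter D2 E X"
  proof (intro allI impI)
    fix X u v assume X: "X \<subseteq> V" "u \<in> V" "u \<notin> X" "v \<in> X"
    have pos: "1 \<le> enter D E X" using strong_cut[OF scD finE X] .
    have "1 \<le> enter D (E - set P1) X + leave D (set P1) X"
    proof (cases "t \<in> X \<and> s \<notin> X")
      case True
      then have "1 \<le> enter D (set P2) X" using cr2[of X] by simp
      also have "\<dots> \<le> enter D (E - set P1) X" by (rule enter_mono) (use finE P2E P(3) in auto)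
      finally show ?thesis by simp
    next
      case False
      show ?thesis
      proof (cases "s \<in> X \<and> t \<notin> X")
        case True
        then show ?thesis using cr1[of X] by simp
      next
        case False2: False
        then have "int (enter D (set P1) X) - int (leave D (set P1) X) = 0" using cr1[of X] False by auto
        then show ?thesis using pos e1[of X] by linarith
      qed
    qed
    then show "1 \<le> enter D2 E X" using e2 by simp
  qed
  have sc2: "strongly_connected V E D2" using cut_strong[OF arcs2 cut] .
  have so2: "strong_orientation V E ends D2" unfolding strong_orientation_def using o2 sc2 by blast
  have dindeg: "int (indeg E D2 v) = int (indeg E D v) + (if v = s then 1 else 0) - (if v = t then 1 else 0)" for v
  proof -
    have a: "indeg E D2 v = card {e\<in>E. fst (D2 e) \<in> {v} \<and> snd (D2 e) \<in> {v}} + enter D2 E {v}"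
      using sum_indeg[OF finE, of "{v}" D2] by simp
    have b: "indeg E D v = card {e\<in>E. fst (D e) \<in> {v} \<and> snd (D e) \<in> {v}} + enter D E {v}"
      using sum_indeg[OF finE, of "{v}" D] by simp
    have c: "{e\<in>E. fst (D2 e) \<in> {v} \<and> snd (D2 e) \<in> {v}} = {e\<in>E. fst (D e) \<in> {v} \<and> snd (D e) \<in> {v}}"
      using internal_orient[OF o2, of "{v}"] internal_orient[OF oD, of "{v}"] by simp
    show ?thesis using a b c e1[of "{v}"] e2[of "{v}"] cr1[of "{v}"] by auto
  qed
  define f where "f = indeg E D"
  define f2 where "f2 = indeg E D2"
  define b where "b = f t"
  have sne: "s \<noteq> t" using st(3) by auto
  have f2s: "f2 s = f s + 1" using dindeg[of s] sne unfolding f_def f2_def by simp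
  have f2t: "f2 t = f t - 1" using dindeg[of t] sne unfolding f_def f2_def by simp
  have f2o: "f2 v = f v" if "v \<noteq> s" "v \<noteq> t" for v using dindeg[of v] that unfolding f_def f2_def by simp
  have fsb: "f s + 2 \<le> b" using st(3) unfolding b_def f_def by simp
  define M where "M = image_mset f (mset_set V)"
  define M2 where "M2 = image_mset f2 (mset_set V)"
  have K: "{v\<in>V. b < f v} = {v\<in>V. b < f2 v}"
  proof -
    have "b < f v \<longleftrightarrow> b < f2 v" for v
    proof (cases "v = s")
      case True then show ?thesis using f2s fsb by simp
    next
      case False
      show ?thesis
      proof (cases "v = t")
        case True then show ?thesis using f2t unfolding b_def by simp
      next
        case False2: False then show ?thesis using f2o False by simp
      qed
    qed
    then show ?thesis by auto
  qed
  have Kst: "s \<notin> {v\<in>V. b < f v}" "t \<notin> {v\<in>V. b < f v}" using fsb unfolding b_def by auto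
  have fil: "filter_mset (\<lambda>x. b < x) M = filter_mset (\<lambda>x. b < x) M2"
  proof -
    have "filter_mset (\<lambda>x. b < x) M = image_mset f (mset_set {v\<in>V. b < f v})"
      unfolding M_def using finV by (simp add: filter_mset_image_mset)
    also have "\<dots> = image_mset f2 (mset_set {v\<in>V. b < f v})"
    proof (rule image_mset_cong)
      fix x assume "x \<in># mset_set {v\<in>V. b < f v}"
      then have "x \<in> {v\<in>V. b < f v}" using finV by simp
      then have "x \<noteq> s" "x \<noteq> t" using Kst by auto
      then show "f x = f2 x" using f2o by simp
    qed
    also have "\<dots> = filter_mset (\<lambda>x. b < x) M2"
      unfolding M2_def using finV K by (simp add: filter_mset_image_mset)
    finally show ?thesis .
  qed
  have cnt: "size (filter_mset (\<lambda>x. x = b) M2) < size (filter_mset (\<lambda>x. x = b) M)"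
  proof -
    have 1: "size (filter_mset (\<lambda>x. x = b) M) = card {v\<in>V. f v = b}"
      unfolding M_def using finV by (simp add: filter_mset_image_mset)
    have 2: "size (filter_mset (\<lambda>x. x = b) M2) = card {v\<in>V. f2 v = b}"
      unfolding M2_def using finV by (simp add: filter_mset_image_mset)
    have "f2 v = b \<longleftrightarrow> f v = b \<and> v \<noteq> t" for v
    proof (cases "v = s")
      case True then show ?thesis using f2s fsb sne by simp
    next
      case False
      show ?thesis
      proof (cases "v = t")
        case True then show ?thesis using f2t fsb unfolding b_def by simp
      next
        case False2: False then show ?thesis using f2o False by simp
      qed
    qed
    then have "{v\<in>V. f2 v = b} = {v\<in>V. f v = b} - {t}" by auto
    moreover have "card ({v\<in>V. f v = b} - {t}) < card {v\<in>V. f v = b}"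
      by (rule card_Diff1_less) (use finV st(2) in \<open>auto simp: b_def\<close>)
    ultimately show ?thesis using 1 2 by simp
  qed
  have sz: "size M = size M2" unfolding M_def M2_def by simp
  have "lex_less (rev (sorted_list_of_multiset M2)) (rev (sorted_list_of_multiset M))"
    by (rule lex_from_counts[OF fil cnt sz])
  then have "lex_less (indeg_vector V E D2) (indeg_vector V E D)"
    unfolding indeg_vector_def M_def M2_def f_def f2_def .
  then show ?thesis using so2 unfolding D2_def by blast
qed

theorem theorem6p1:
  fixes V :: "'v set" and E :: "'e set" and ends :: "'e \<Rightarrow> 'v \<times> 'v"
    and D :: "'e \<Rightarrow> 'v \<times> 'v"
  assumes "ugraph V E ends"
    and "\<exists>D0. strong_orientation V E ends D0"
    and "strong_orientation V E ends D"
  shows "dec_min_strong V E ends D \<longleftrightarrow>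
    \<not> (\<exists>s\<in>V. \<exists>t\<in>V. indeg E D t \<ge> indeg E D s + 2 \<and>
          (\<exists>P1 P2. dpath V E D s t P1 \<and> dpath V E D s t P2 \<and> set P1 \<inter> set P2 = {}))"
proof
  assume dm: "dec_min_strong V E ends D"
  show "\<not> (\<exists>s\<in>V. \<exists>t\<in>V. indeg E D t \<ge> indeg E D s + 2 \<and>
          (\<exists>P1 P2. dpath V E D s t P1 \<and> dpath V E D s t P2 \<and> set P1 \<inter> set P2 = {}))"
  proof
    assume "\<exists>s\<in>V. \<exists>t\<in>V. indeg E D t \<ge> indeg E D s + 2 \<and>
          (\<exists>P1 P2. dpath V E D s t P1 \<and> dpath V E D s t P2 \<and> set P1 \<inter> set P2 = {})"
    then obtain s t P1 P2 where st: "s \<in> V" "t \<in> V" "indeg E D t \<ge> indeg E D s + 2"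
      and P: "dpath V E D s t P1" "dpath V E D s t P2" "set P1 \<inter> set P2 = {}" by blast
    from easy[OF assms(1) assms(3) st P] dm show False unfolding dec_min_strong_def by blast
  qed
next
  assume nip: "\<not> (\<exists>s\<in>V. \<exists>t\<in>V. indeg E D t \<ge> indeg E D s + 2 \<and>
          (\<exists>P1 P2. dpath V E D s t P1 \<and> dpath V E D s t P2 \<and> set P1 \<inter> set P2 = {}))"
  show "dec_min_strong V E ends D" unfolding dec_min_strong_def
  proof (intro conjI allI impI)
    show "strong_orientation V E ends D" by (rule assms(3))
    fix D' assume "strong_orientation V E ends D'"
    then interpret twoD V E ends D D' using assms by unfold_locales
    show "\<not> lex_less (indeg_vector V E D') (indeg_vector V E D)" using hard[OF nip] .
  qed
qed

end
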